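(* Let $n>0$ be an integer and $S\subseteq\mathbb{N}^{\mathbb{N}}$. Suppose $S=\bigcup_{i\in\mathbb{N}}\bigcap_{j\in\mathbb{N}}X_{ij}=\bigcap_{i\in\mathbb{N}}\bigcup_{j\in\mathbb{N}}Y_{ij}$, where all $X_{ij}$ and $Y_{ij}$ are $\mathbf{\Delta}^0_n$ subsets of $\mathbb{N}^{\mathbb{N}}$. Then there is a single family $(Z_{ij})_{i,j\in\mathbb{N}}$ of $\mathbf{\Delta}^0_n$ sets such that $S=\bigcup_{i\in\mathbb{N}}\bigcap_{j\in\mathbb{N}}Z_{ij}=\bigcap_{i\in\mathbb{N}}\bigcup_{j\in\mathbb{N}}Z_{ij}$.
   Context: Baire space $\mathbb{N}^{\mathbb{N}}$ carries the product of discrete topologies; $\mathbf{\Delta}^0_n$ denotes the boldface Borel pointclass (sets that are both $\mathbf{\Sigma}^0_n$ and $\mathbf{\Pi}^0_n$). *)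

theory Defs
  imports "HOL-Analysis.Analysis"
begin

(* Level 0 is unused (empty). *)
fun Sigma0 :: "nat \<Rightarrow> ('a::topological_space) set set" where
  "Sigma0 0 = {}"
| "Sigma0 (Suc 0) = {U. open U}"
| "Sigma0 (Suc (Suc n)) = {\<Union>i::nat. A i | A. \<forall>i. - A i \<in> Sigma0 (Suc n)}"

definition Pi0 :: "nat \<Rightarrow> ('a::topological_space) set set" where
  "Pi0 n = {U. - U \<in> Sigma0 n}"

definition Delta0 :: "nat \<Rightarrow> ('a::topological_space) set set" where
  "Delta0 n = Sigma0 n \<inter> Pi0 n"

(* Baire space: nat => nat with the product topology (library instance for
   function spaces) of the discrete topology on nat. *)
type_synonym baire = "nat \<Rightarrow> nat"

end

theory Submission
  imports Defs "HOL-Library.Nat_Bijection"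
begin

lemma Sigma_Un:
  assumes "A \<in> Sigma0 k" "B \<in> Sigma0 k"
  shows "A \<union> B \<in> (Sigma0 k :: ('a::topological_space) set set)"
proof (cases k)
  case 0 then show ?thesis using assms by simp
next
  case (Suc m)
  show ?thesis
  proof (cases m)
    case 0 then show ?thesis using assms Suc by auto
  next
    case (Suc p)
    from assms obtain FA FB :: "nat \<Rightarrow> 'a set" where FA: "A = (\<Union>i. FA i)" "\<forall>i. - FA i \<in> Sigma0 (Suc p)"
      and FB: "B = (\<Union>i. FB i)" "\<forall>i. - FB i \<in> Sigma0 (Suc p)"
      using \<open>k = Suc m\<close> Suc by auto
    define C where "C i = (if even i then FA (i div 2) else FB (i div 2))" for i
    have "A \<union> B = (\<Union>i. C i)"
    proof
      show "A \<union> B \<subseteq> (\<Union>i. C i)"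
      proof
        fix x assume "x \<in> A \<union> B"
        then show "x \<in> (\<Union>i. C i)"
        proof
          assume "x \<in> A" then obtain i where "x \<in> FA i" using FA by auto
          then have "x \<in> C (2*i)" by (simp add: C_def)
          then show ?thesis by blast
        next
          assume "x \<in> B" then obtain i where "x \<in> FB i" using FB by auto
          then have "x \<in> C (2*i+1)" by (simp add: C_def)
          then show ?thesis by blast
        qed
      qed
    next
      show "(\<Union>i. C i) \<subseteq> A \<union> B" using FA FB by (auto simp: C_def split: if_splits)
    qed
    moreover have "\<forall>i. - C i \<in> Sigma0 (Suc p)" using FA FB by (simp add: C_def)
    ultimately show ?thesis using \<open>k = Suc m\<close> Suc by auto
  qed
qed

lemma Sigma_Int:
  "A \<in> Sigma0 k \<Longrightarrow> B \<in> Sigma0 k \<Longrightarrow> A \<inter> B \<in> (Sigma0 k :: ('a::topological_space) set set)"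
proof (induction k arbitrary: A B rule: Sigma0.induct)
  case 1 then show ?case by simp
next
  case 2 then show ?case by auto
next
  fix p and A B :: "'a set"
  assume "A \<in> Sigma0 (Suc (Suc p))" "B \<in> Sigma0 (Suc (Suc p))"
  then obtain FA FB :: "nat \<Rightarrow> 'a set" where FA: "A = (\<Union>i. FA i)" "\<forall>i. - FA i \<in> Sigma0 (Suc p)"
      and FB: "B = (\<Union>i. FB i)" "\<forall>i. - FB i \<in> Sigma0 (Suc p)" by auto
  define C where "C k = FA (fst (prod_decode k)) \<inter> FB (snd (prod_decode k))" for k
  have "A \<inter> B = (\<Union>k. C k)"
  proof
    show "A \<inter> B \<subseteq> (\<Union>k. C k)"
    proof
      fix x assume "x \<in> A \<inter> B"
      then obtain i j where "x \<in> FA i" "x \<in> FB j" using FA FB by auto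
      then have "x \<in> C (prod_encode (i,j))" by (simp add: C_def)
      then show "x \<in> (\<Union>k. C k)" by blast
    qed
  next
    show "(\<Union>k. C k) \<subseteq> A \<inter> B" using FA FB by (auto simp: C_def)
  qed
  moreover have "\<forall>k. - C k \<in> Sigma0 (Suc p)"
    using FA(2) FB(2) by (simp add: C_def Sigma_Un)
  ultimately show "A \<inter> B \<in> Sigma0 (Suc (Suc p))" by auto
qed

lemma Delta_compl: "A \<in> Delta0 k \<Longrightarrow> - A \<in> Delta0 k"
  by (simp add: Delta0_def Pi0_def)

lemma Delta_Int: "A \<in> Delta0 k \<Longrightarrow> B \<in> Delta0 k \<Longrightarrow> A \<inter> B \<in> Delta0 k"
  unfolding Delta0_def Pi0_def using Sigma_Int Sigma_Un by auto

lemma Delta_Un: "A \<in> Delta0 k \<Longrightarrow> B \<in> Delta0 k \<Longrightarrow> A \<union> B \<in> Delta0 k"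
  unfolding Delta0_def Pi0_def using Sigma_Int Sigma_Un by auto

theorem mainTheorem12:
  fixes n :: nat and S :: "baire set" and X Y :: "nat \<Rightarrow> nat \<Rightarrow> baire set"
  assumes "n > 0"
    and "\<forall>i j. X i j \<in> Delta0 n"
    and "\<forall>i j. Y i j \<in> Delta0 n"
    and "S = (\<Union>i. \<Inter>j. X i j)"
    and "S = (\<Inter>i. \<Union>j. Y i j)"
  shows "\<exists>Z :: nat \<Rightarrow> nat \<Rightarrow> baire set. (\<forall>i j. Z i j \<in> Delta0 n) \<and>
           S = (\<Union>i. \<Inter>j. Z i j) \<and> S = (\<Inter>i. \<Union>j. Z i j)"
proof -
  define W where "W a b m j = (case j of 0 \<Rightarrow> Y b m
     | Suc k \<Rightarrow> (Y b m \<inter> X a k) \<union> (- Y b m \<inter> Y b k))" for a b m j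
  define Z where "Z i j = (case prod_decode i of (a, r) \<Rightarrow>
     (case prod_decode r of (b, m) \<Rightarrow> W a b m j))" for i j
  have ZW: "\<exists>a b m. \<forall>j. Z i j = W a b m j" for i
  proof -
    obtain a r where ar: "prod_decode i = (a, r)" by (cases "prod_decode i")
    obtain b m where bm: "prod_decode r = (b, m)" by (cases "prod_decode r")
    show ?thesis by (rule exI[of _ a], rule exI[of _ b], rule exI[of _ m]) (simp add: Z_def ar bm)
  qed
  have WZ: "\<exists>i. \<forall>j. Z i j = W a b m j" for a b m
    by (rule exI[of _ "prod_encode (a, prod_encode (b, m))"]) (simp add: Z_def)
  have Wd: "W a b m j \<in> Delta0 n" for a b m j
    using assms(2,3) by (cases j) (auto simp: W_def intro!: Delta_Un Delta_Int Delta_compl)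
  have full: "(\<forall>j. x \<in> W a b m j) \<Longrightarrow> x \<in> S" for x a b m
  proof -
    assume h: "\<forall>j. x \<in> W a b m j"
    then have "x \<in> Y b m" using h[rule_format, of 0] by (simp add: W_def)
    then have "\<forall>k. x \<in> X a k" using h by (auto simp: W_def split: nat.splits dest: spec[of _ "Suc _"])
    then show "x \<in> S" using assms(4) by auto
  qed
  have nonempty: "x \<in> S \<Longrightarrow> \<exists>j. x \<in> W a b m j" for x a b m
  proof -
    assume "x \<in> S"
    then obtain k where k: "x \<in> Y b k" using assms(5) by auto
    show ?thesis
    proof (cases "x \<in> Y b m")
      case True then show ?thesis by (intro exI[of _ 0]) (simp add: W_def)
    next
      case False then show ?thesis using k by (intro exI[of _ "Suc k"]) (simp add: W_def)
    qed
  qed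
  have S1: "S = (\<Union>i. \<Inter>j. Z i j)"
  proof
    show "S \<subseteq> (\<Union>i. \<Inter>j. Z i j)"
    proof
      fix x assume xS: "x \<in> S"
      then obtain a where a: "\<forall>j. x \<in> X a j" using assms(4) by auto
      from xS obtain m where m: "x \<in> Y 0 m" using assms(5) by auto
      obtain i where i: "\<forall>j. Z i j = W a 0 m j" using WZ by blast
      have "\<forall>j. x \<in> W a 0 m j" using a m by (auto simp: W_def split: nat.splits)
      then show "x \<in> (\<Union>i. \<Inter>j. Z i j)" using i by auto
    qed
  next
    show "(\<Union>i. \<Inter>j. Z i j) \<subseteq> S"
    proof
      fix x assume "x \<in> (\<Union>i. \<Inter>j. Z i j)"
      then obtain i where "\<forall>j. x \<in> Z i j" by auto
      moreover obtain a b m where "\<forall>j. Z i j = W a b m j" using ZW by blast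
      ultimately show "x \<in> S" using full by auto
    qed
  qed
  have S2: "S = (\<Inter>i. \<Union>j. Z i j)"
  proof
    show "S \<subseteq> (\<Inter>i. \<Union>j. Z i j)"
    proof
      fix x assume "x \<in> S"
      show "x \<in> (\<Inter>i. \<Union>j. Z i j)"
      proof
        fix i
        obtain a b m where "\<forall>j. Z i j = W a b m j" using ZW by blast
        then show "x \<in> (\<Union>j. Z i j)" using nonempty[OF \<open>x \<in> S\<close>, of a b m] by auto
      qed
    qed
  next
    show "(\<Inter>i. \<Union>j. Z i j) \<subseteq> S"
    proof
      fix x assume x: "x \<in> (\<Inter>i. \<Union>j. Z i j)"
      show "x \<in> S"
      proof (rule ccontr)
        assume "x \<notin> S"
        then obtain b where b: "\<forall>j. x \<notin> Y b j" using assms(5) by auto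
        obtain i where i: "\<forall>j. Z i j = W 0 b 0 j" using WZ by blast
        have "\<forall>j. x \<notin> W 0 b 0 j" using b by (auto simp: W_def split: nat.splits)
        then show False using x i by (metis UN_iff INT_iff UNIV_I)
      qed
    qed
  qed
  show ?thesis using S1 S2 Wd ZW by (metis)
qed

end
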